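(* Fix $q_{\min}>0$ and let $\phi_t(n):=P^{\mathbb N_0}_t1_{\mathbb N_+}(n)$ for $n\in\mathbb N_0$, $t\ge 0$. Then: (a) for all $r\in\mathbb N_+$ and $t>0$, $\partial_t\phi_t(r)=2q_{\min}\big(\phi_t(r+1)+\phi_t(r-1)-2\phi_t(r)\big)\le 0$; (b) $\phi_t(y)\ge\phi_t(x)$ whenever $y\ge x$; (c) for all $r\in\mathbb N_+$ and $t>0$, $\phi_t(r)\le \dfrac{r}{2\sqrt{t\,q_{\min}}}$.
   Context: $\mathbb N_0=\{0,1,2,\dots\}$, $\mathbb N_+=\{1,2,\dots\}$. $G_{\mathbb N_0}=(\mathbb N_0,q_0)$ is the graph with $q_0(x,y)=2q_{\min}$ if $|x-y|=1$ and $x>0$, and $q_0(x,y)=0$ otherwise (a birth–death chain absorbed at $0$), with Laplacian $\Delta f(x)=\sum_y q_0(x,y)(f(y)-f(x))$. Its heat semigroup $P^{\mathbb N_0}_t$ on bounded functions is defined as follows: for finite $S$ let $q_S(x,y)=q_0(x,y)1_S(x)$ with Laplacian $\Delta_S$ and $P^S_tf=\sum_{k\ge0}t^k\Delta_S^k(f1_S)/k!$; then $P_tf=\lim_i P^{S_i}_tf$ pointwise along any increasing exhaustion of $\mathbb N_0$ by finite sets. *)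

theory Defs
  imports "HOL-Analysis.Analysis"
begin

definition q0 :: "real \<Rightarrow> nat \<Rightarrow> nat \<Rightarrow> real" where
  "q0 qmin x y = (if (y = x + 1 \<or> x = y + 1) \<and> x > 0 then 2 * qmin else 0)"

definition qS :: "real \<Rightarrow> nat set \<Rightarrow> nat \<Rightarrow> nat \<Rightarrow> real" where
  "qS qmin S x y = q0 qmin x y * indicator S x"

text \<open>Laplacian Delta_S f(x) = sum_y q_S(x,y)(f y - f x). The sum is over y \<le> x+1,
  which contains every y with q0(x,y) \<noteq> 0, so it is the full sum over N0.\<close>
definition lapS :: "real \<Rightarrow> nat set \<Rightarrow> (nat \<Rightarrow> real) \<Rightarrow> nat \<Rightarrow> real" where
  "lapS qmin S f x = (\<Sum>y\<le>Suc x. qS qmin S x y * (f y - f x))"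

definition heatS :: "real \<Rightarrow> nat set \<Rightarrow> real \<Rightarrow> (nat \<Rightarrow> real) \<Rightarrow> nat \<Rightarrow> real" where
  "heatS qmin S t f x =
     (\<Sum>k. t ^ k / fact k * ((lapS qmin S ^^ k) (\<lambda>y. f y * indicator S y)) x)"

definition heat :: "real \<Rightarrow> real \<Rightarrow> (nat \<Rightarrow> real) \<Rightarrow> nat \<Rightarrow> real" where
  "heat qmin t f x = lim (\<lambda>i. heatS qmin {..i} t f x)"

definition phi :: "real \<Rightarrow> real \<Rightarrow> nat \<Rightarrow> real" where
  "phi qmin t n = heat qmin t (indicator {1..}) n"

end

theory Submission
  imports Defs
begin


lemma lapS_explicit:
  "lapS q S h x = (if x \<in> S \<and> 0 < x then 2*q*(h (Suc x) - h x) + 2*q*(h (x-1) - h x) else 0)"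
proof (cases "x \<in> S \<and> 0 < x")
  case True
  have "lapS q S h x = (\<Sum>y\<in>{x-1, Suc x}. qS q S x y * (h y - h x))"
    unfolding lapS_def
    by (rule sum.mono_neutral_right) (auto simp: qS_def q0_def)
  also have "\<dots> = 2*q*(h (Suc x) - h x) + 2*q*(h (x-1) - h x)"
    using True by (simp add: qS_def q0_def)
  finally show ?thesis using True by simp
next
  case False
  then show ?thesis unfolding lapS_def qS_def by (auto simp: q0_def)
qed



definition FF :: "nat \<Rightarrow> real" where "FF = indicator {1..}"
definition aa :: "real \<Rightarrow> nat \<Rightarrow> nat \<Rightarrow> real" where "aa q k = (lapS q UNIV ^^ k) FF"

lemma abs2q: "(q::real) \<ge> 0 \<Longrightarrow> \<bar>d\<bar> \<le> C \<Longrightarrow> \<bar>2*q*d\<bar> \<le> 2*q*C"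
  by (simp add: abs_mult mult_left_mono)

lemma lapS_bound:
  assumes q: "q \<ge> 0" and hB: "\<And>y. \<bar>h y\<bar> \<le> B"
  shows "\<bar>lapS q S h x\<bar> \<le> 8*q*B"
proof -
  have "\<bar>h (Suc x) - h x\<bar> \<le> 2*B" "\<bar>h (x-1) - h x\<bar> \<le> 2*B"
    using hB[of "Suc x"] hB[of x] hB[of "x-1"] by linarith+
  then have a1: "\<bar>2*q*(h (Suc x) - h x)\<bar> \<le> 2*q*(2*B)" and a2: "\<bar>2*q*(h (x-1) - h x)\<bar> \<le> 2*q*(2*B)"
    using q abs2q by blast+
  have B0: "0 \<le> B" using hB[of 0] by linarith
  show ?thesis
  proof (cases "x \<in> S \<and> 0 < x")
    case True
    then have "lapS q S h x = 2*q*(h (Suc x) - h x) + 2*q*(h (x-1) - h x)" by (simp add: lapS_explicit)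
    moreover have "\<bar>2*q*(h (Suc x) - h x) + 2*q*(h (x-1) - h x)\<bar> \<le> 8*q*B"
      using abs_triangle_ineq[of "2*q*(h (Suc x) - h x)" "2*q*(h (x-1) - h x)"] a1 a2 by linarith
    ultimately show ?thesis by simp
  next
    case False
    then have "lapS q S h x = 0" by (subst lapS_explicit) (use False in auto)
    then show ?thesis using q B0 by simp
  qed
qed

lemma lapS_pow_bound:
  assumes q: "q \<ge> 0" and hB: "\<And>y. \<bar>h y\<bar> \<le> B"
  shows "\<bar>(lapS q S ^^ k) h x\<bar> \<le> (8*q)^k*B"
proof (induction k arbitrary: x)
  case 0 then show ?case using hB by simp
next
  case (Suc k)
  have "\<bar>lapS q S ((lapS q S ^^ k) h) x\<bar> \<le> 8*q*((8*q)^k*B)"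
    by (rule lapS_bound[OF q Suc.IH])
  then show ?case by (simp add: mult.assoc)
qed

lemma FF_bound: "\<bar>FF y\<bar> \<le> 1" by (simp add: FF_def indicator_def)

lemma locality:
  assumes "x + k \<le> i"
  shows "(lapS q {..i} ^^ k) (\<lambda>y. FF y * indicator {..i} y) x = aa q k x"
  using assms
proof (induction k arbitrary: x)
  case 0 then show ?case by (simp add: aa_def)
next
  case (Suc k)
  have e1: "(lapS q {..i} ^^ k) (\<lambda>y. FF y * indicator {..i} y) (Suc x) = aa q k (Suc x)"
    using Suc by simp
  have e2: "(lapS q {..i} ^^ k) (\<lambda>y. FF y * indicator {..i} y) x = aa q k x"
    using Suc by simp
  have e3: "(lapS q {..i} ^^ k) (\<lambda>y. FF y * indicator {..i} y) (x-1) = aa q k (x-1)"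
    using Suc by simp
  have "(lapS q {..i} ^^ Suc k) (\<lambda>y. FF y * indicator {..i} y) x
     = lapS q {..i} ((lapS q {..i} ^^ k) (\<lambda>y. FF y * indicator {..i} y)) x" by simp
  also have "\<dots> = lapS q UNIV (aa q k) x"
    apply (subst lapS_explicit)
    apply (subst lapS_explicit)
    using Suc.prems e1 e2 e3 by simp
  also have "\<dots> = aa q (Suc k) x" by (simp add: aa_def)
  finally show ?case .
qed

lemma summable_expbound:
  "summable (\<lambda>k. (c::real)^k / fact k)"
  using summable_exp[of c] by (simp add: field_simps)

lemma heatS_summable:
  assumes q: "q \<ge> 0" and hB: "\<And>y. \<bar>h y\<bar> \<le> B"
  shows "summable (\<lambda>k. \<bar>t ^ k / fact k * ((lapS q S ^^ k) h) x\<bar>)"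
proof (rule summable_comparison_test[OF _ summable_mult[OF summable_expbound[of "8*q*\<bar>t\<bar>"], of B]])
  show "\<exists>N. \<forall>n\<ge>N. norm \<bar>t ^ n / fact n * (lapS q S ^^ n) h x\<bar> \<le> B * ((8 * q * \<bar>t\<bar>) ^ n / fact n)"
  proof (intro exI allI impI)
    fix n
    have "\<bar>t ^ n / fact n * (lapS q S ^^ n) h x\<bar> = \<bar>t\<bar>^n / fact n * \<bar>(lapS q S ^^ n) h x\<bar>"
      by (simp add: abs_mult power_abs)
    also have "\<dots> \<le> \<bar>t\<bar>^n / fact n * ((8*q)^n*B)"
      by (rule mult_left_mono[OF lapS_pow_bound[OF q hB]]) simp
    also have "\<dots> = B * ((8 * q * \<bar>t\<bar>) ^ n / fact n)" by (simp add: power_mult_distrib)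
    finally show "norm \<bar>t ^ n / fact n * (lapS q S ^^ n) h x\<bar> \<le> B * ((8 * q * \<bar>t\<bar>) ^ n / fact n)" by simp
  qed
qed



definition Phi :: "real \<Rightarrow> real \<Rightarrow> nat \<Rightarrow> real" where
  "Phi q t x = (\<Sum>k. t ^ k / fact k * aa q k x)"

lemma heatS_UNIV: "heatS q UNIV t FF x = Phi q t x"
  by (simp add: heatS_def Phi_def aa_def)

lemma aa_bound: "q \<ge> 0 \<Longrightarrow> \<bar>aa q k x\<bar> \<le> (8*q)^k"
  using lapS_pow_bound[of q FF 1, where S=UNIV] FF_bound by (simp add: aa_def)

lemma Phi_summable: "q \<ge> 0 \<Longrightarrow> summable (\<lambda>k. \<bar>t ^ k / fact k * aa q k x\<bar>)"
  unfolding aa_def using heatS_summable[of q FF 1] FF_bound by blast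

lemma heatS_tendsto:
  assumes q: "q \<ge> 0"
  shows "(\<lambda>i. heatS q {..i} t FF x) \<longlonglongrightarrow> Phi q t x"
proof -
  define g where "g i = (\<lambda>y. FF y * indicator {..i} y)" for i :: nat
  have gB: "\<bar>g i y\<bar> \<le> 1" for i y by (simp add: g_def FF_def indicator_def)
  define A where "A i k = t ^ k / fact k * (lapS q {..i} ^^ k) (g i) x" for i k
  define e where "e i k = A i k - t ^ k / fact k * aa q k x" for i k
  define b where "b k = 2 * ((8*q*\<bar>t\<bar>)^k / fact k)" for k
  have sb: "summable b" unfolding b_def by (intro summable_mult summable_expbound)
  define T where "T N = (\<Sum>n. b (n + N))" for N
  have T0: "T \<longlonglongrightarrow> 0"
  proof -
    have "(\<lambda>N. suminf b - (\<Sum>i<N. b i)) \<longlonglongrightarrow> suminf b - suminf b"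
      by (intro tendsto_diff tendsto_const summable_LIMSEQ sb)
    then show ?thesis unfolding T_def using suminf_minus_initial_segment[OF sb] by simp
  qed
  have sA: "summable (\<lambda>k. \<bar>A i k\<bar>)" for i
    unfolding A_def using heatS_summable[OF q, of "g i" 1] gB by blast
  have sP: "summable (\<lambda>k. \<bar>t ^ k / fact k * aa q k x\<bar>)" using Phi_summable[OF q] .
  have se: "summable (\<lambda>k. \<bar>e i k\<bar>)" for i
  proof (rule summable_rabs_comparison_test[of _ "\<lambda>k. \<bar>A i k\<bar> + \<bar>t ^ k / fact k * aa q k x\<bar>"])
    show "\<exists>N. \<forall>n\<ge>N. \<bar>e i n\<bar> \<le> \<bar>A i n\<bar> + \<bar>t ^ n / fact n * aa q n x\<bar>"
      unfolding e_def by (intro exI[of _ 0] allI impI abs_triangle_ineq4)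
    show "summable (\<lambda>k. \<bar>A i k\<bar> + \<bar>t ^ k / fact k * aa q k x\<bar>)"
      by (rule summable_add[OF sA sP])
  qed
  have eb: "\<bar>e i k\<bar> \<le> b k" for i k
  proof -
    have "\<bar>(lapS q {..i} ^^ k) (g i) x - aa q k x\<bar> \<le> (8*q)^k + (8*q)^k"
      using lapS_pow_bound[OF q, of "g i" 1 k "{..i}" x, OF gB] aa_bound[OF q, of k x] by linarith
    then have "\<bar>t ^ k / fact k\<bar> * \<bar>(lapS q {..i} ^^ k) (g i) x - aa q k x\<bar> \<le> \<bar>t ^ k / fact k\<bar> * ((8*q)^k + (8*q)^k)"
      by (rule mult_left_mono) simp
    moreover have "e i k = t ^ k / fact k * ((lapS q {..i} ^^ k) (g i) x - aa q k x)"
      unfolding e_def A_def by (simp add: right_diff_distrib)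
    moreover have "\<bar>t ^ k / fact k\<bar> * ((8*q)^k + (8*q)^k) = b k"
      unfolding b_def by (simp add: power_abs power_mult_distrib)
    ultimately show ?thesis by (simp add: abs_mult)
  qed
  have e0: "e i k = 0" if "x + k \<le> i" for i k
    using locality[OF that, of q] unfolding e_def A_def g_def by simp
  have diff: "heatS q {..i} t FF x - Phi q t x = suminf (e i)" for i
  proof -
    have "heatS q {..i} t FF x = suminf (A i)" unfolding heatS_def A_def g_def by simp
    moreover have "suminf (A i) - (\<Sum>k. t^k/fact k*aa q k x) = (\<Sum>k. A i k - t^k/fact k * aa q k x)"
      by (rule suminf_diff[OF summable_rabs_cancel[OF sA] summable_rabs_cancel[OF sP]])
    ultimately show ?thesis unfolding e_def Phi_def by simp
  qed
  have bnd: "\<bar>heatS q {..i} t FF x - Phi q t x\<bar> \<le> T (i - x)" if "x \<le> i" for i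
  proof -
    have "\<bar>suminf (e i)\<bar> \<le> (\<Sum>k. \<bar>e i k\<bar>)" by (rule summable_rabs[OF se])
    also have "\<dots> = (\<Sum>n. \<bar>e i (n + (i - x))\<bar>) + (\<Sum>k<i - x. \<bar>e i k\<bar>)"
      by (rule suminf_split_initial_segment[OF se])
    also have "(\<Sum>k<i - x. \<bar>e i k\<bar>) = 0"
      using that by (intro sum.neutral) (auto intro!: e0)
    also have "(\<Sum>n. \<bar>e i (n + (i - x))\<bar>) \<le> T (i - x)"
      unfolding T_def
      by (intro suminf_le eb summable_ignore_initial_segment se sb)
    finally show ?thesis using diff by simp
  qed
  have "(\<lambda>i. heatS q {..i} t FF x - Phi q t x) \<longlonglongrightarrow> 0"
  proof (rule Lim_null_comparison)
    show "\<forall>\<^sub>F i in sequentially. norm (heatS q {..i} t FF x - Phi q t x) \<le> T (i - x)"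
      using bnd by (auto simp: eventually_sequentially)
    show "(\<lambda>i. T (i - x)) \<longlonglongrightarrow> 0"
      by (rule filterlim_compose[OF T0 filterlim_minus_const_nat_at_top])
  qed
  then show ?thesis by (simp add: LIM_zero_iff)
qed

lemma phi_Phi: "q \<ge> 0 \<Longrightarrow> phi q t x = Phi q t x"
  unfolding phi_def heat_def FF_def[symmetric]
  by (rule limI[OF heatS_tendsto])



lemma aa_Suc: assumes "0 < r" shows "aa q (Suc k) r = 2*q*(aa q k (Suc r) - aa q k r) + 2*q*(aa q k (r-1) - aa q k r)"
proof -
  have "aa q (Suc k) r = lapS q UNIV (aa q k) r" by (simp add: aa_def)
  also have "\<dots> = 2*q*(aa q k (Suc r) - aa q k r) + 2*q*(aa q k (r-1) - aa q k r)"
    using assms by (subst lapS_explicit) simp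
  finally show ?thesis .
qed

lemma Phi_sums: assumes "q \<ge> 0" shows "(\<lambda>k. t ^ k / fact k * aa q k x) sums Phi q t x"
  unfolding Phi_def by (rule summable_sums[OF summable_rabs_cancel[OF Phi_summable[OF assms]]])

lemma Phi_deriv:
  assumes q: "q \<ge> 0" and r: "0 < r"
  shows "((\<lambda>s. Phi q s r) has_real_derivative 2*q*(Phi q t (r+1) + Phi q t (r-1) - 2 * Phi q t r)) (at t)"
proof -
  define c where "c n = aa q n r / fact n" for n
  have eq: "Phi q s r = (\<Sum>n. c n * s^n)" for s
    unfolding Phi_def c_def by (simp add: field_simps)
  have sm: "summable (\<lambda>n. c n * y^n)" for y
  proof -
    have "summable (\<lambda>k. y ^ k / fact k * aa q k r)"
      by (rule summable_rabs_cancel[OF Phi_summable[OF q]])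
    then show ?thesis unfolding c_def by (simp add: field_simps)
  qed
  have D: "((\<lambda>s. \<Sum>n. c n * s^n) has_field_derivative (\<Sum>n. diffs c n * t^n)) (at t)"
    by (rule termdiffs_strong_converges_everywhere[OF sm])
  have dval: "diffs c n * t^n = 2*q*(t ^ n / fact n * aa q n (r+1) + t ^ n / fact n * aa q n (r-1) - 2 * (t ^ n / fact n * aa q n r))" for n
  proof -
    have "diffs c n * t^n = t^n / fact n * aa q (Suc n) r"
      unfolding diffs_def c_def fact_Suc by (simp add: field_simps del: of_nat_Suc)
    then show ?thesis using aa_Suc[OF r, of q n] by (simp add: algebra_simps)
  qed
  have "(\<lambda>n. diffs c n * t^n) sums (2*q*(Phi q t (r+1) + Phi q t (r-1) - 2 * Phi q t r))"
    unfolding dval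
    by (intro sums_mult sums_diff sums_add Phi_sums q)
  then have "(\<Sum>n. diffs c n * t^n) = 2*q*(Phi q t (r+1) + Phi q t (r-1) - 2 * Phi q t r)"
    by (rule sums_unique[symmetric])
  with D show ?thesis unfolding eq[abs_def] by simp
qed



definition dd :: "nat \<Rightarrow> nat \<Rightarrow> real" where
  "dd n i = real (n choose ((n + i) div 2)) / 2 ^ n"
definition vv :: "nat \<Rightarrow> nat \<Rightarrow> real" where
  "vv n x = (\<Sum>i\<in>{1..x}. dd n i)"
definition MM :: "(nat \<Rightarrow> real) \<Rightarrow> nat \<Rightarrow> real" where
  "MM h x = (if 0 < x then (h (Suc x) + h (x - 1)) / 2 else h x)"

lemma binom_rec:
  assumes "2 \<le> i"
  shows "Suc n choose ((Suc n + i) div 2) = (n choose ((n + i - 1) div 2)) + (n choose ((n + i + 1) div 2))"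
proof -
  obtain s where s1: "(Suc n + i) div 2 = Suc s" and s2: "(n + i - 1) div 2 = s" and s3: "(n + i + 1) div 2 = Suc s"
    using assms by (intro that[of "(n + i - 1) div 2"]) presburger+
  show ?thesis unfolding s1 s2 s3 by simp
qed

lemma binom_rec1:
  "Suc n choose ((Suc n + 1) div 2) = (n choose ((n + 1) div 2)) + (n choose ((n + 2) div 2))"
proof -
  have a: "(Suc n + 1) div 2 = Suc (n div 2)" "(n + 2) div 2 = Suc (n div 2)" by presburger+
  have b: "n choose ((n + 1) div 2) = n choose (n div 2)"
  proof (cases "even n")
    case True then show ?thesis by (metis add_self_div_2 div_plus_div_distrib_dvd_left even_succ_div_two odd_one)
  next
    case False
    then have "(n + 1) div 2 = n - n div 2" by presburger
    then show ?thesis using binomial_symmetric[of "n div 2" n] by simp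
  qed
  show ?thesis unfolding a b by simp
qed

lemma dd_rec: "2 \<le> i \<Longrightarrow> 2 * dd (Suc n) i = dd n (i - 1) + dd n (i + 1)"
  unfolding dd_def using binom_rec[of i n]
  by (simp add: Suc_diff_le field_simps)

lemma dd_rec1: "2 * dd (Suc n) 1 = dd n 1 + dd n 2"
  unfolding dd_def using binom_rec1[of n]
  by (simp add: field_simps)



lemma vv_Suc: "vv n (Suc y) = vv n y + dd n (Suc y)"
  unfolding vv_def by (simp add: sum.cl_ivl_Suc)

lemma vv_0 [simp]: "vv n 0 = 0" unfolding vv_def by simp

lemma vv_rec: "0 < x \<Longrightarrow> 2 * vv (Suc n) x = vv n (Suc x) + vv n (x - 1)"
proof (induction x)
  case 0 then show ?case by simp
next
  case (Suc x)
  show ?case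
  proof (cases "x = 0")
    case True
    then show ?thesis using dd_rec1[of n] by (simp add: vv_Suc numeral_2_eq_2)
  next
    case False
    then have "2 * vv (Suc n) (Suc x) = vv n (Suc x) + vv n (x - 1) + 2 * dd (Suc n) (Suc x)"
      using Suc.IH by (simp add: vv_Suc algebra_simps)
    also have "2 * dd (Suc n) (Suc x) = dd n x + dd n (Suc (Suc x))"
      using dd_rec[of "Suc x" n] False by simp
    finally show ?thesis using False
      by (cases x) (simp_all add: vv_Suc algebra_simps)
  qed
qed

lemma vv0_FF: "vv 0 x = FF x"
proof (induction x)
  case 0 then show ?case by (simp add: FF_def)
next
  case (Suc x) then show ?case
    by (cases x) (auto simp: vv_Suc FF_def dd_def)
qed

lemma MM_vv: "MM (vv n) x = vv (Suc n) x"
  using vv_rec[of x n] by (auto simp: MM_def)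

lemma lap_MM: "lapS q UNIV h x = 4*q*(MM h x - h x)"
  by (simp add: lapS_explicit MM_def algebra_simps)

definition PP :: "nat \<Rightarrow> nat \<Rightarrow> real" where
  "PP k x = (\<Sum>j\<le>k. real (k choose j) * (-1)^(k-j) * vv j x)"

lemma MM_PP: "MM (PP k) x = (\<Sum>j\<le>k. real (k choose j) * (-1)^(k-j) * vv (Suc j) x)"
proof (cases "0 < x")
  case True
  have "PP k (Suc x) + PP k (x-1) = (\<Sum>j\<le>k. real (k choose j) * (-1)^(k-j) * (vv j (Suc x) + vv j (x-1)))"
    unfolding PP_def by (simp add: sum.distrib[symmetric] algebra_simps)
  also have "\<dots> = (\<Sum>j\<le>k. real (k choose j) * (-1)^(k-j) * (2 * vv (Suc j) x))"
    using vv_rec[OF True] by simp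
  also have "\<dots> = 2 * (\<Sum>j\<le>k. real (k choose j) * (-1)^(k-j) * vv (Suc j) x)"
    by (simp add: sum_distrib_left algebra_simps)
  finally show ?thesis using True by (simp add: MM_def)
next
  case False then show ?thesis by (simp add: MM_def PP_def)
qed

lemma PP_Suc: "PP (Suc k) x = MM (PP k) x - PP k x"
proof -
  have m: "- PP k x = (\<Sum>j\<le>Suc k. real (k choose j) * (-1)^(Suc k - j) * vv j x)"
    unfolding PP_def by (simp add: sum_negf[symmetric] Suc_diff_le)
  also have "\<dots> = (-1)^(Suc k) * vv 0 x + (\<Sum>j\<le>k. real (k choose Suc j) * (-1)^(k - j) * vv (Suc j) x)"
    by (subst sum.atMost_Suc_shift) simp
  finally have m2: "- PP k x = (-1)^(Suc k) * vv 0 x + (\<Sum>j\<le>k. real (k choose Suc j) * (-1)^(k - j) * vv (Suc j) x)" .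
  have "PP (Suc k) x = (-1)^(Suc k) * vv 0 x + (\<Sum>j\<le>k. real (Suc k choose Suc j) * (-1)^(k - j) * vv (Suc j) x)"
    unfolding PP_def by (subst sum.atMost_Suc_shift) simp
  also have "\<dots> = (-1)^(Suc k) * vv 0 x + (\<Sum>j\<le>k. real (k choose Suc j) * (-1)^(k - j) * vv (Suc j) x)
       + (\<Sum>j\<le>k. real (k choose j) * (-1)^(k-j) * vv (Suc j) x)"
    by (simp add: sum.distrib[symmetric] algebra_simps)
  finally show ?thesis using m2 MM_PP[of k x] by simp
qed

lemma aa_PP: "aa q k x = (4*q)^k * PP k x"
proof (induction k arbitrary: x)
  case 0 then show ?case by (simp add: aa_def PP_def vv0_FF)
next
  case (Suc k)
  have h: "aa q k = (\<lambda>x. (4*q)^k * PP k x)" using Suc.IH by auto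
  have "aa q (Suc k) x = lapS q UNIV (aa q k) x" by (simp add: aa_def)
  also have "\<dots> = 4*q*(MM (aa q k) x - aa q k x)" by (rule lap_MM)
  also have "MM (aa q k) x = (4*q)^k * MM (PP k) x" unfolding h MM_def by (simp add: algebra_simps)
  finally have "aa q (Suc k) x = 4*q*((4*q)^k * MM (PP k) x - (4*q)^k * PP k x)"
    using Suc.IH[of x] by simp
  also have "\<dots> = (4*q)^Suc k * (MM (PP k) x - PP k x)" by (simp add: algebra_simps)
  finally show ?case using PP_Suc[of k x] by simp
qed



lemma dd_nonneg: "0 \<le> dd n i" by (simp add: dd_def)
lemma dd_le1: "dd n i \<le> 1"
  using binomial_le_pow2[of n "(n+i) div 2"] unfolding dd_def
  by (simp add: divide_le_eq_1)

lemma vv_nonneg: "0 \<le> vv n x" unfolding vv_def by (intro sum_nonneg dd_nonneg)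
lemma vv_le: "vv n x \<le> real x"
proof -
  have "vv n x \<le> (\<Sum>i\<in>{1..x}. 1)" unfolding vv_def by (intro sum_mono dd_le1)
  then show ?thesis by simp
qed

lemma term_id:
  fixes s t c :: real
  assumes "i \<le> k" "s = c * t"
  shows "s^i / fact i * v * ((-s)^(k-i) / fact (k-i))
       = t^k / fact k * c^k * (real (k choose i) * (-1)^(k-i) * v)"
proof -
  have p: "s^i * s^(k-i) = s^k" using assms(1) by (simp add: power_add[symmetric])
  have b: "real (k choose i) = fact k / (fact i * fact (k - i))" using binomial_fact[OF assms(1)] by simp
  have "s^i / fact i * v * ((-s)^(k-i) / fact (k-i)) = (s^i * s^(k-i)) * (-1)^(k-i) * v / (fact i * fact (k-i))"
    by (simp add: power_minus[of s] field_simps)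
  also have "\<dots> = (c*t)^k * (-1)^(k-i) * v / (fact i * fact (k-i))" using p assms(2) by simp
  also have "\<dots> = t^k / fact k * c^k * (real (k choose i) * (-1)^(k-i) * v)"
    unfolding b by (simp add: power_mult_distrib field_simps)
  finally show ?thesis .
qed

lemma Phi_poisson:
  assumes q: "q \<ge> 0"
  shows "Phi q t x = exp (-(4*q*t)) * (\<Sum>n. (4*q*t)^n / fact n * vv n x)"
proof -
  define s where "s = 4*q*t"
  define bs where "bs n = s^n / fact n * vv n x" for n
  define as where "as n = (-s)^n / fact n" for n
  have sb: "summable (\<lambda>n. norm (bs n))"
  proof (rule summable_comparison_test[OF _ summable_mult[OF summable_expbound[of "\<bar>s\<bar>"], of "real x"]])
    show "\<exists>N. \<forall>n\<ge>N. norm (norm (bs n)) \<le> real x * (\<bar>s\<bar> ^ n / fact n)"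
    proof (intro exI allI impI)
      fix n
      have "norm (norm (bs n)) = \<bar>s\<bar>^n / fact n * vv n x"
        unfolding bs_def using vv_nonneg[of n x] by (simp add: abs_mult power_abs)
      also have "\<dots> \<le> \<bar>s\<bar>^n / fact n * real x" by (rule mult_left_mono[OF vv_le]) simp
      finally show "norm (norm (bs n)) \<le> real x * (\<bar>s\<bar> ^ n / fact n)" by (simp add: mult_ac)
    qed
  qed
  have sa: "summable (\<lambda>n. norm (as n))"
    unfolding as_def using summable_expbound[of "\<bar>s\<bar>"] by (simp add: power_abs)
  have ea: "suminf as = exp (-s)"
  proof -
    have "(\<lambda>n. (-s)^n /\<^sub>R fact n) sums exp (-s)" by (rule exp_converges)
    then show ?thesis unfolding as_def by (simp add: sums_iff field_simps)
  qed
  have "suminf bs * suminf as = (\<Sum>k. \<Sum>i\<le>k. bs i * as (k - i))"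
    by (rule Cauchy_product[OF sb sa])
  also have "\<dots> = (\<Sum>k. t ^ k / fact k * aa q k x)"
  proof (rule suminf_cong)
    fix k
    have "(\<Sum>i\<le>k. bs i * as (k - i)) = (\<Sum>i\<le>k. t^k / fact k * (4*q)^k * (real (k choose i) * (-1)^(k-i) * vv i x))"
      unfolding bs_def as_def by (intro sum.cong refl term_id) (simp_all add: s_def)
    also have "\<dots> = t ^ k / fact k * aa q k x"
      unfolding aa_PP PP_def by (simp add: sum_distrib_left mult.assoc)
    finally show "(\<Sum>i\<le>k. bs i * as (k - i)) = t ^ k / fact k * aa q k x" .
  qed
  finally show ?thesis unfolding Phi_def ea s_def bs_def by (simp add: mult.commute)
qed



definition W :: "real \<Rightarrow> nat \<Rightarrow> real" where
  "W s x = (\<Sum>n. s^n / fact n * vv n x)"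

lemma W_summable: "summable (\<lambda>n. s^n / fact n * vv n x)"
proof (rule summable_rabs_cancel, rule summable_rabs_comparison_test[OF _ summable_mult[OF summable_expbound[of "\<bar>s\<bar>"], of "real x"]])
  show "\<exists>N. \<forall>n\<ge>N. \<bar>s ^ n / fact n * vv n x\<bar> \<le> real x * (\<bar>s\<bar> ^ n / fact n)"
  proof (intro exI allI impI)
    fix n
    have "\<bar>s ^ n / fact n * vv n x\<bar> = \<bar>s\<bar>^n / fact n * vv n x"
      using vv_nonneg[of n x] by (simp add: abs_mult power_abs)
    also have "\<dots> \<le> \<bar>s\<bar>^n / fact n * real x" by (rule mult_left_mono[OF vv_le]) simp
    finally show "\<bar>s ^ n / fact n * vv n x\<bar> \<le> real x * (\<bar>s\<bar> ^ n / fact n)" by (simp add: mult_ac)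
  qed
qed

lemma W_sums: "(\<lambda>n. s^n / fact n * vv n x) sums W s x"
  unfolding W_def by (rule summable_sums[OF W_summable])

lemma Phi_W: "q \<ge> 0 \<Longrightarrow> Phi q t x = exp (-(4*q*t)) * W (4*q*t) x"
  unfolding W_def by (rule Phi_poisson)

lemma vv_mono: "x \<le> y \<Longrightarrow> vv n x \<le> vv n y"
  unfolding vv_def by (rule sum_mono2) (auto simp: dd_nonneg)

lemma dd_anti: "1 \<le> i \<Longrightarrow> i \<le> j \<Longrightarrow> dd n j \<le> dd n i"
proof -
  assume a: "1 \<le> i" "i \<le> j"
  have "n choose ((n + j) div 2) \<le> n choose ((n + i) div 2)"
  proof (cases "(n + j) div 2 \<le> n")
    case True
    show ?thesis by (rule binomial_antimono) (use a True in \<open>auto intro: div_le_mono\<close>)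
  next
    case False then show ?thesis by (simp add: binomial_eq_0)
  qed
  then show ?thesis unfolding dd_def by (simp add: divide_right_mono)
qed

lemma vv_concave: "1 \<le> r \<Longrightarrow> vv n (Suc r) + vv n (r - 1) - 2 * vv n r \<le> 0"
proof -
  assume r: "1 \<le> r"
  then obtain r' where r': "r = Suc r'" by (cases r) auto
  have "vv n (Suc r) + vv n (r - 1) - 2 * vv n r = dd n (Suc r) - dd n r"
    unfolding r' by (simp add: vv_Suc)
  also have "\<dots> \<le> 0" using dd_anti[of r "Suc r" n] r by simp
  finally show ?thesis .
qed

lemma vv_le_dd1: "vv n r \<le> real r * dd n 1"
proof -
  have "vv n r \<le> (\<Sum>i\<in>{1..r}. dd n 1)" unfolding vv_def by (intro sum_mono dd_anti) auto
  then show ?thesis by simp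
qed

lemma central_rel: "Suc m * (Suc (2*m) choose Suc m) = (2*m+1) * (2*m choose m)"
  using Suc_times_binomial[of m "2*m"] by simp

lemma central_rel2: "(2*Suc m choose Suc m) = 2 * (Suc (2*m) choose Suc m)"
proof -
  have "2*Suc m = Suc (Suc (2*m))" by simp
  then have "(2*Suc m choose Suc m) = (Suc (2*m) choose m) + (Suc (2*m) choose Suc m)"
    by simp
  also have "(Suc (2*m) choose m) = (Suc (2*m) choose Suc m)"
    using binomial_symmetric[of m "Suc (2*m)"] by (simp add: Suc_diff_le)
  finally show ?thesis by simp
qed

lemma central_step:
  assumes IH: "(2*m choose m)^2 * (2*m+1) \<le> 4^(2*m)"
  shows "(Suc (2*m) choose Suc m)^2 * (2*m+3) \<le> 4^(2*m+1)"
proof -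
  define c where "c = 2*m choose m"
  define e where "e = Suc (2*m) choose Suc m"
  have rel: "Suc m * e = (2*m+1) * c" unfolding c_def e_def by (rule central_rel)
  have "(Suc m)^2 * (e^2 * (2*m+3)) = ((Suc m * e))^2 * (2*m+3)" by (simp only: power_mult_distrib mult.assoc)
  also have "\<dots> = (c^2 * (2*m+1)) * ((2*m+1)*(2*m+3))" unfolding rel by (simp add: power_mult_distrib power2_eq_square algebra_simps)
  also have "\<dots> \<le> 4^(2*m) * ((2*m+1)*(2*m+3))" using IH unfolding c_def by (rule mult_right_mono) simp
  also have "\<dots> \<le> 4^(2*m) * (4 * (Suc m)^2)" by (rule mult_left_mono) (simp_all add: power2_eq_square algebra_simps)
  also have "\<dots> = (Suc m)^2 * 4^(2*m+1)" by simp
  finally have "(Suc m)^2 * (e^2 * (2*m+3)) \<le> (Suc m)^2 * 4^(2*m+1)" .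
  then show ?thesis unfolding e_def by simp
qed

lemma central_even: "(2*m choose m)^2 * (2*m+1) \<le> 4^(2*m)"
proof (induction m)
  case 0 then show ?case by simp
next
  case (Suc m)
  define e where "e = Suc (2*m) choose Suc m"
  have h: "e^2 * (2*m+3) \<le> 4^(2*m+1)" unfolding e_def by (rule central_step[OF Suc.IH])
  have "(2*Suc m choose Suc m)^2 * (2*Suc m+1) = 4 * (e^2 * (2*m+3))"
    unfolding central_rel2 e_def[symmetric] by (simp add: power_mult_distrib algebra_simps)
  also have "\<dots> \<le> 4 * 4^(2*m+1)" using h by simp
  also have "\<dots> = 4^(2*Suc m)" by simp
  finally show ?case .
qed

lemma central_all: "(n choose ((n+1) div 2))^2 * (n+1) \<le> 4^n"
proof (cases "even n")
  case True
  then obtain m where n: "n = 2*m" by blast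
  have "(n+1) div 2 = m" using n by simp
  then show ?thesis using central_even[of m] n by simp
next
  case False
  then obtain m where n: "n = Suc (2*m)" using oddE by fastforce
  have "(n+1) div 2 = Suc m" using n by simp
  moreover have "(Suc (2*m) choose Suc m)^2 * (2*m+2) \<le> (Suc (2*m) choose Suc m)^2 * (2*m+3)" by (rule mult_left_mono) simp_all
  ultimately show ?thesis using central_step[OF central_even[of m]] n by simp
qed

lemma dd1_sq: "(dd n 1)^2 * (n+1) \<le> 1"
proof -
  have "real ((n choose ((n+1) div 2))^2 * (n+1)) \<le> real (4^n)"
    using central_all[of n] by (simp only: of_nat_le_iff)
  moreover have "(2::real)^n * 2^n = 4^n" by (simp add: power_mult_distrib[symmetric])
  ultimately have "(real (n choose ((n+1) div 2)))^2 * (n+1) \<le> (2^n)^2"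
    by (simp add: power2_eq_square algebra_simps)
  then show ?thesis unfolding dd_def by (simp add: power_divide field_simps)
qed



lemma amgm:
  fixes d e m :: real
  assumes e: "e > 0" and m: "m > 0" and d: "d^2 * m \<le> 1"
  shows "d \<le> (e + 1/(e*m))/2"
proof -
  have d2: "d^2 \<le> 1/m" using d m by (simp add: field_simps)
  have "0 \<le> (e - d)^2" by simp
  then have "2*e*d \<le> e^2 + d^2" by (simp add: power2_eq_square algebra_simps)
  also have "\<dots> \<le> e^2 + 1/m" using d2 by simp
  finally have "2*e*d \<le> e^2 + 1/m" .
  then have "d \<le> (e^2 + 1/m) / (2*e)" using e by (simp add: field_simps)
  also have "\<dots> = (e + 1/(e*m))/2" using e m by (simp add: field_simps power2_eq_square)
  finally show ?thesis .
qed

lemma exp_shift_sums: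
  fixes s :: real
  assumes s: "s > 0"
  shows "(\<lambda>n. s^n / fact (Suc n)) sums ((exp s - 1) / s)"
proof -
  have "(\<lambda>n. s^n / fact n) sums exp s"
    using exp_converges[of s] by (simp add: field_simps)
  then have "(\<lambda>n. s^(Suc n) / fact (Suc n)) sums (exp s - 1)"
    by (subst sums_Suc_iff) simp
  then have "(\<lambda>n. s^(Suc n) / fact (Suc n) / s) sums ((exp s - 1) / s)"
    by (rule sums_divide)
  moreover have "(\<lambda>n. s^(Suc n) / fact (Suc n) / s) = (\<lambda>n. s^n / fact (Suc n))"
    using s by (simp add: fun_eq_iff del: fact_Suc)
  ultimately show ?thesis by simp
qed

lemma W_bound:
  fixes s :: real
  assumes s: "s > 0"
  shows "W s r \<le> exp s * real r / sqrt s"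
proof -
  define e where "e = 1 / sqrt s"
  have e: "e > 0" using s by (simp add: e_def)
  have sq: "sqrt s * sqrt s = s" using s by simp
  have t: "s^n / fact n * vv n r \<le> (real r * e / 2) * (s^n / fact n) + (real r / (2*e)) * (s^n / fact (Suc n))" for n
  proof -
    have "dd n 1 \<le> (e + 1/(e*(n+1)))/2"
      by (rule amgm[OF e]) (use dd1_sq[of n] in simp_all)
    then have "vv n r \<le> real r * ((e + 1/(e*(n+1)))/2)"
      using vv_le_dd1[of n r] by (meson mult_left_mono of_nat_0_le_iff order_trans)
    then have "s^n / fact n * vv n r \<le> s^n / fact n * (real r * ((e + 1/(e*(n+1)))/2))"
      by (rule mult_left_mono) (use s in simp)
    also have "\<dots> = (real r * e / 2) * (s^n / fact n) + (real r / (2*e)) * (s^n / fact (Suc n))"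
      using e by (simp add: fact_Suc field_simps del: of_nat_Suc)
    finally show ?thesis .
  qed
  have "(\<lambda>n. (real r * e / 2) * (s^n / fact n) + (real r / (2*e)) * (s^n / fact (Suc n)))
        sums ((real r * e / 2) * exp s + (real r / (2*e)) * ((exp s - 1) / s))"
    by (intro sums_add sums_mult exp_shift_sums s) (use exp_converges[of s] in \<open>simp add: field_simps\<close>)
  then have "W s r \<le> (real r * e / 2) * exp s + (real r / (2*e)) * ((exp s - 1) / s)"
    by (rule sums_le[OF t W_sums])
  also have "\<dots> \<le> (real r * e / 2) * exp s + (real r / (2*e)) * (exp s / s)"
    using s e by (intro add_left_mono mult_left_mono divide_right_mono) simp_all
  also have "\<dots> = exp s * real r / sqrt s"
    using s sq unfolding e_def by (simp add: field_simps)
  finally show ?thesis .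
qed



lemma W_concave:
  assumes s: "s \<ge> 0" and r: "1 \<le> r"
  shows "W s (r+1) + W s (r-1) - 2 * W s r \<le> 0"
proof -
  have S: "(\<lambda>n. s^n / fact n * (vv n (Suc r) + vv n (r-1) - 2 * vv n r)) sums (W s (r+1) + W s (r-1) - 2 * W s r)"
    using sums_diff[OF sums_add[OF W_sums[of s "r+1"] W_sums[of s "r-1"]] sums_mult[OF W_sums[of s r], of 2]]
    by (simp add: algebra_simps)
  have T: "s^n / fact n * (vv n (Suc r) + vv n (r-1) - 2 * vv n r) \<le> 0" for n
  proof -
    have a: "vv n (Suc r) + vv n (r-1) - 2 * vv n r \<le> 0" using vv_concave[OF r, of n] by simp
    have b: "0 \<le> s^n / fact n" using s by simp
    show ?thesis by (rule mult_nonneg_nonpos[OF b a])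
  qed
  show ?thesis by (rule sums_le[OF T S sums_zero])
qed

lemma W_mono:
  assumes s: "s \<ge> 0" and xy: "x \<le> y"
  shows "W s x \<le> W s y"
proof (rule sums_le[OF _ W_sums W_sums])
  fix n show "s^n / fact n * vv n x \<le> s^n / fact n * vv n y"
    by (rule mult_left_mono[OF vv_mono[OF xy]]) (use s in simp)
qed

theorem mainTheorem6:
  fixes qmin :: real
  assumes "qmin > 0"
  shows "(\<forall>(r::nat) (t::real). r \<ge> 1 \<and> t > 0 \<longrightarrow>
            ((\<lambda>s. phi qmin s r) has_real_derivative
               2 * qmin * (phi qmin t (r + 1) + phi qmin t (r - 1) - 2 * phi qmin t r)) (at t)
            \<and> 2 * qmin * (phi qmin t (r + 1) + phi qmin t (r - 1) - 2 * phi qmin t r) \<le> 0)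
       \<and> (\<forall>(t::real) (x::nat) (y::nat). t \<ge> 0 \<and> y \<ge> x \<longrightarrow> phi qmin t y \<ge> phi qmin t x)
       \<and> (\<forall>(r::nat) (t::real). r \<ge> 1 \<and> t > 0 \<longrightarrow>
            phi qmin t r \<le> real r / (2 * sqrt (t * qmin)))"
proof (intro conjI allI impI)
  have q: "qmin \<ge> 0" using assms by simp
  have pp: "phi qmin = Phi qmin" using phi_Phi[OF q] by (intro ext) simp
  fix r :: nat and t :: real
  assume h: "1 \<le> r \<and> 0 < t"
  then show "((\<lambda>s. phi qmin s r) has_real_derivative
               2 * qmin * (phi qmin t (r + 1) + phi qmin t (r - 1) - 2 * phi qmin t r)) (at t)"
    unfolding pp using Phi_deriv[OF q, of r t] by simp
  have s: "4*qmin*t \<ge> 0" using h q by simp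
  have "Phi qmin t (r + 1) + Phi qmin t (r - 1) - 2 * Phi qmin t r
       = exp (-(4*qmin*t)) * (W (4*qmin*t) (r+1) + W (4*qmin*t) (r-1) - 2 * W (4*qmin*t) r)"
    unfolding Phi_W[OF q] by (simp add: algebra_simps)
  also have "\<dots> \<le> 0" using W_concave[OF s, of r] h by (simp add: mult_nonneg_nonpos)
  finally show "2 * qmin * (phi qmin t (r + 1) + phi qmin t (r - 1) - 2 * phi qmin t r) \<le> 0"
    unfolding pp using q by (simp add: mult_nonneg_nonpos)
next
  have q: "qmin \<ge> 0" using assms by simp
  have pp: "phi qmin = Phi qmin" using phi_Phi[OF q] by (intro ext) simp
  fix t :: real and x y :: nat
  assume h: "0 \<le> t \<and> x \<le> y"
  have s: "4*qmin*t \<ge> 0" using h q by simp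
  show "phi qmin t x \<le> phi qmin t y"
    unfolding pp Phi_W[OF q] using W_mono[OF s, of x y] h by simp
next
  have q: "qmin \<ge> 0" using assms by simp
  have pp: "phi qmin = Phi qmin" using phi_Phi[OF q] by (intro ext) simp
  fix r :: nat and t :: real
  assume h: "1 \<le> r \<and> 0 < t"
  have s: "4*qmin*t > 0" using h assms by simp
  have "phi qmin t r = exp (-(4*qmin*t)) * W (4*qmin*t) r" unfolding pp Phi_W[OF q] ..
  also have "\<dots> \<le> exp (-(4*qmin*t)) * (exp (4*qmin*t) * real r / sqrt (4*qmin*t))"
    by (rule mult_left_mono[OF W_bound[OF s]]) simp
  also have "\<dots> = real r / sqrt (4*qmin*t)" by (simp add: exp_minus field_simps)
  also have "sqrt (4*qmin*t) = 2 * sqrt (t * qmin)"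
    by (simp add: real_sqrt_mult mult.commute)
  finally show "phi qmin t r \<le> real r / (2 * sqrt (t * qmin))" .
qed


end
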